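(* Let $G$ be a (strong) placement game played on a board $B$. Then there exist simplicial complexes $\Delta$ and $\Gamma$ on the vertex set $\{x_1,\dots,x_n,y_1,\dots,y_o\}$ such that $G$ played on $B$ is equivalent to the game played on $\Gamma$ with the Illegal Ruleset, and equivalent to the game played on $\Delta$ with the Legal Ruleset; that is, under the identification of positions of $G$ with sets of occupied vertices described below, the legal positions of $G$ on $B$ are exactly the legal positions of each of these games (one may take $\Delta=\Delta_{G,B}$, the legal complex, and $\Gamma=\Gamma_{G,B}$, the illegal complex).
   Context: A combinatorial game is a two-player game (players Left and Right) of perfect information and no chance, given by a set of positions, a starting position, and rules specifying legal moves; a legal position is one reachable from the starting position by legal moves. The board is a graph. A (strong) placement game is a combinatorial game such that: (i) the starting position is the empty board; (ii) players place pieces on empty spaces of the board according to the rules; (iii) pieces are never moved or removed; (iv) if a position can be reached by a sequence of legal moves, then every sequence of moves leading to this position consists only of legal moves. Positions are not assumed to alternate between players. A basic position is a board with exactly one piece placed. Label the basic positions by indices; a position of $G$ is identified with the set of vertices of $\{x_1,\dots,x_n,y_1,\dots,y_o\}$ containing $x_i$ iff Left has placed in basic position $i$ and $y_j$ iff Right has placed in basic position $j$. The legal complex $\Delta_{G,B}$ is the simplicial complex whose faces are the sets corresponding to legal positions (equivalently, subsets of the set of a legal position); the illegal complex $\Gamma_{G,B}$ is the simplicial complex whose facets are the sets corresponding to minimal illegal positions. Illegal Ruleset on a simplicial complex $\Gamma$: (1) Left may only play (place pieces) on vertices labelled $x_i$ and Right only on vertices labelled $y_i$; (2) for every facet of $\Gamma$,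 the occupied vertices may not include all vertices of that facet. Legal Ruleset on a simplicial complex $\Delta$: (1) Left may only play on vertices labelled $x_i$ and Right only on vertices labelled $y_i$; (2) the set of occupied vertices must be a face of $\Delta$. *)

theory Defs
  imports Main
begin

text \<open>Vertices: X i stands for x_i (Left plays basic position i),
  Y j stands for y_j (Right plays basic position j).\<close>
datatype vtx = X nat | Y nat

definition vertices :: "nat \<Rightarrow> nat \<Rightarrow> vtx set" where
  "vertices n m = X ` {1..n} \<union> Y ` {1..m}"

text \<open>A game in which pieces are placed (never moved or removed), starting from
  the empty board, without alternation of players.  The rules are given by a predicate
  mv S v: in position S (set of occupied vertices) it is legal to place on vertex v.
  Left may only place on X-vertices, Right only on Y-vertices; this is built into
  the labelling.\<close>
inductive_set reach :: "vtx set \<Rightarrow> (vtx set \<Rightarrow> vtx \<Rightarrow> bool) \<Rightarrow> vtx set set"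
  for V mv where
  empty: "{} \<in> reach V mv"
| step: "S \<in> reach V mv \<Longrightarrow> v \<in> V \<Longrightarrow> v \<notin> S \<Longrightarrow> mv S v \<Longrightarrow> insert v S \<in> reach V mv"

definition strong_placement :: "vtx set \<Rightarrow> (vtx set \<Rightarrow> vtx \<Rightarrow> bool) \<Rightarrow> bool" where
  "strong_placement V mv \<longleftrightarrow>
     (\<forall>S \<in> reach V mv. \<forall>vs. distinct vs \<and> set vs = S \<longrightarrow>
        (\<forall>k < length vs. mv (set (take k vs)) (vs ! k)))"

text \<open>Simplicial complex on vertex set V: a down-closed family of finite subsets of V
  (the void complex is allowed).\<close>
definition simplicial_complex :: "'a set \<Rightarrow> 'a set set \<Rightarrow> bool" where
  "simplicial_complex V K \<longleftrightarrow>
     (\<forall>F \<in> K. F \<subseteq> V \<and> finite F) \<and> (\<forall>F \<in> K. \<forall>G. G \<subseteq> F \<longrightarrow> G \<in> K)"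

definition facets :: "'a set set \<Rightarrow> 'a set set" where
  "facets K = {F \<in> K. \<forall>G \<in> K. F \<subseteq> G \<longrightarrow> G = F}"

definition illegal_ruleset :: "vtx set set \<Rightarrow> vtx set \<Rightarrow> vtx \<Rightarrow> bool" where
  "illegal_ruleset \<Gamma> S v \<longleftrightarrow> (\<forall>F \<in> facets \<Gamma>. \<not> F \<subseteq> insert v S)"

definition legal_ruleset :: "vtx set set \<Rightarrow> vtx set \<Rightarrow> vtx \<Rightarrow> bool" where
  "legal_ruleset \<Delta> S v \<longleftrightarrow> insert v S \<in> \<Delta>"

end

theory Submission
  imports Defs
begin

lemma reach_sub: "S \<in> reach V mv \<Longrightarrow> S \<subseteq> V \<and> finite S"
  by (induction rule: reach.induct) auto

lemma reach_cong:
  assumes "\<And>S v. S \<subseteq> V \<Longrightarrow> v \<in> V \<Longrightarrow> mv1 S v = mv2 S v"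
  shows "reach V mv1 = reach V mv2"
proof
  show "reach V mv1 \<subseteq> reach V mv2"
  proof
    fix S assume "S \<in> reach V mv1" then show "S \<in> reach V mv2"
    proof (induction rule: reach.induct)
      case empty then show ?case by (rule reach.empty)
    next
      case (step S v) then show ?case using reach_sub[OF step(1)] assms[of S v] by (simp add: reach.step)
    qed
  qed
  show "reach V mv2 \<subseteq> reach V mv1"
  proof
    fix S assume "S \<in> reach V mv2" then show "S \<in> reach V mv1"
    proof (induction rule: reach.induct)
      case empty then show ?case by (rule reach.empty)
    next
      case (step S v) then show ?case using reach_sub[OF step(1)] assms[of S v] by (simp add: reach.step)
    qed
  qed
qed

lemma prefix_reach:
  assumes sp: "strong_placement V mv" and S: "S \<in> reach V mv"
    and d: "distinct vs" and s: "set vs = S"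
  shows "k \<le> length vs \<Longrightarrow> set (take k vs) \<in> reach V mv"
proof (induction k)
  case 0 then show ?case by (simp add: reach.empty)
next
  case (Suc k)
  then have k: "k < length vs" by simp
  have t: "set (take (Suc k) vs) = insert (vs ! k) (set (take k vs))"
    using k by (simp add: take_Suc_conv_app_nth)
  have "distinct (take (Suc k) vs)" using d by simp
  then have "vs ! k \<notin> set (take k vs)" using k by (simp add: take_Suc_conv_app_nth)
  moreover have "vs ! k \<in> V" using k s reach_sub[OF S] by auto
  moreover have "mv (set (take k vs)) (vs ! k)" using sp S d s k
    unfolding strong_placement_def by blast
  ultimately show ?case using t Suc by (auto intro: reach.step)
qed

lemma down_closed:
  assumes sp: "strong_placement V mv" and S: "S \<in> reach V mv" and T: "T \<subseteq> S"
  shows "T \<in> reach V mv"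
proof -
  have fS: "finite S" using reach_sub[OF S] by simp
  obtain xs where xs: "distinct xs" "set xs = T"
    using finite_distinct_list finite_subset[OF T fS] by blast
  obtain ys where ys: "distinct ys" "set ys = S - T"
    using finite_distinct_list fS by blast
  have d: "distinct (xs @ ys)" using xs ys by auto
  have s: "set (xs @ ys) = S" using xs ys T by auto
  have "set (take (length xs) (xs @ ys)) \<in> reach V mv"
    by (rule prefix_reach[OF sp S d s]) simp
  then show ?thesis using xs by simp
qed

lemma min_nonface:
  "finite T \<Longrightarrow> T \<notin> R \<Longrightarrow> \<exists>F\<subseteq>T. F \<notin> R \<and> (\<forall>G. G \<subset> F \<longrightarrow> G \<in> R)"
proof (induction T rule: finite_psubset_induct)
  case (psubset A)
  show ?case
  proof (cases "\<forall>G. G \<subset> A \<longrightarrow> G \<in> R")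
    case True then show ?thesis using psubset by blast
  next
    case False
    then obtain G where "G \<subset> A" "G \<notin> R" by blast
    then show ?thesis using psubset.IH by (meson order.trans psubset_imp_subset)
  qed
qed

theorem theorem4p4:
  fixes n m :: nat and mv :: "vtx set \<Rightarrow> vtx \<Rightarrow> bool"
  assumes "strong_placement (vertices n m) mv"
  shows "\<exists>\<Delta> \<Gamma>. simplicial_complex (vertices n m) \<Delta> \<and> simplicial_complex (vertices n m) \<Gamma>
           \<and> reach (vertices n m) (illegal_ruleset \<Gamma>) = reach (vertices n m) mv
           \<and> reach (vertices n m) (legal_ruleset \<Delta>) = reach (vertices n m) mv"
proof -
  define V where "V = vertices n m"
  define R where "R = reach V mv"
  have fV: "finite V" unfolding V_def vertices_def by simp
  have sp: "strong_placement V mv" using assms V_def by simp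
  have dc: "\<And>S T. S \<in> R \<Longrightarrow> T \<subseteq> S \<Longrightarrow> T \<in> R"
    unfolding R_def using down_closed[OF sp] by blast
  have RV: "\<And>S. S \<in> R \<Longrightarrow> S \<subseteq> V \<and> finite S" unfolding R_def using reach_sub by blast
  define M where "M = {F. F \<subseteq> V \<and> F \<notin> R \<and> (\<forall>G. G \<subset> F \<longrightarrow> G \<in> R)}"
  define \<Gamma> where "\<Gamma> = {G. \<exists>F\<in>M. G \<subseteq> F}"
  have scD: "simplicial_complex V R"
    unfolding simplicial_complex_def using RV dc by blast
  have G1: "\<And>F. F \<in> \<Gamma> \<Longrightarrow> F \<subseteq> V"
    unfolding \<Gamma>_def M_def by blast
  have G2: "\<And>F G. F \<in> \<Gamma> \<Longrightarrow> G \<subseteq> F \<Longrightarrow> G \<in> \<Gamma>"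
    unfolding \<Gamma>_def by blast
  have scG: "simplicial_complex V \<Gamma>"
    unfolding simplicial_complex_def using G1 G2 finite_subset[OF G1 fV] by blast
  have fac1: "\<And>F. F \<in> facets \<Gamma> \<Longrightarrow> F \<in> M"
  proof -
    fix F assume "F \<in> facets \<Gamma>"
    then have F: "F \<in> \<Gamma>" "\<And>G. G \<in> \<Gamma> \<Longrightarrow> F \<subseteq> G \<Longrightarrow> G = F"
      unfolding facets_def by auto
    then obtain F' where "F' \<in> M" "F \<subseteq> F'" unfolding \<Gamma>_def by blast
    moreover have "F' \<in> \<Gamma>" using \<open>F' \<in> M\<close> unfolding \<Gamma>_def by blast
    ultimately show "F \<in> M" using F(2) by metis
  qed
  have fac2: "\<And>F. F \<in> M \<Longrightarrow> F \<in> facets \<Gamma>"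
  proof -
    fix F assume F: "F \<in> M"
    have "F \<in> \<Gamma>" using F unfolding \<Gamma>_def by blast
    moreover have "\<And>G. G \<in> \<Gamma> \<Longrightarrow> F \<subseteq> G \<Longrightarrow> G = F"
    proof -
      fix G assume "G \<in> \<Gamma>" "F \<subseteq> G"
      then obtain F' where F': "F' \<in> M" "G \<subseteq> F'" unfolding \<Gamma>_def by blast
      have "F \<subseteq> F'" using F' \<open>F \<subseteq> G\<close> by blast
      have "\<not> F \<subset> F'" using F F' unfolding M_def by blast
      then show "G = F" using \<open>F \<subseteq> F'\<close> F' \<open>F \<subseteq> G\<close> by blast
    qed
    ultimately show "F \<in> facets \<Gamma>" unfolding facets_def by blast
  qed
  have key: "\<And>T. T \<subseteq> V \<Longrightarrow> (\<forall>F\<in>facets \<Gamma>. \<not> F \<subseteq> T) \<longleftrightarrow> T \<in> R"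
  proof -
    fix T assume TV: "T \<subseteq> V"
    show "(\<forall>F\<in>facets \<Gamma>. \<not> F \<subseteq> T) \<longleftrightarrow> T \<in> R"
    proof
      assume h: "\<forall>F\<in>facets \<Gamma>. \<not> F \<subseteq> T"
      show "T \<in> R"
      proof (rule ccontr)
        assume "T \<notin> R"
        then obtain F where "F \<subseteq> T" "F \<notin> R" "\<forall>G. G \<subset> F \<longrightarrow> G \<in> R"
          using min_nonface[of T R] finite_subset[OF TV fV] by blast
        then have "F \<in> M" using TV unfolding M_def by blast
        then show False using fac2 h \<open>F \<subseteq> T\<close> by blast
      qed
    next
      assume "T \<in> R"
      then show "\<forall>F\<in>facets \<Gamma>. \<not> F \<subseteq> T" using fac1 dc unfolding M_def by blast
    qed
  qed
  have L: "reach V (legal_ruleset R) = R"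
  proof
    show "reach V (legal_ruleset R) \<subseteq> R"
    proof
      fix S assume "S \<in> reach V (legal_ruleset R)" then show "S \<in> R"
        by (induction rule: reach.induct)
          (auto simp: legal_ruleset_def R_def intro: reach.empty)
    qed
    show "R \<subseteq> reach V (legal_ruleset R)"
    proof
      fix S assume "S \<in> R" then have "S \<in> reach V mv" unfolding R_def .
      then show "S \<in> reach V (legal_ruleset R)"
      proof (induction rule: reach.induct)
        case empty then show ?case by (rule reach.empty)
        case (step S v)
        then show ?case using reach.step[of S V "legal_ruleset R" v]
          unfolding legal_ruleset_def R_def by (auto intro: reach.step)
      qed
    qed
  qed
  have I: "reach V (illegal_ruleset \<Gamma>) = reach V (legal_ruleset R)"
    by (rule reach_cong) (simp add: illegal_ruleset_def legal_ruleset_def key)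
  have "simplicial_complex V R \<and> simplicial_complex V \<Gamma>
      \<and> reach V (illegal_ruleset \<Gamma>) = reach V mv \<and> reach V (legal_ruleset R) = reach V mv"
    using scD scG L I by (simp add: R_def)
  then show ?thesis unfolding V_def by blast
qed

end
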